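(* Let $\mathcal{I}$ be a countable nonempty set of database instances, $\mathcal{L}$ a query language, and $p$ an instance-independent pricing function. The following are equivalent: (1) $p$ has no information arbitrage; (2) there is a function $f:\Pi^{\mathcal{L}}_{\mathcal{I}}\to\mathbb{R}_{\ge 0}$ that is monotone over $\Pi^{\mathcal{L}}_{\mathcal{I}}$ such that $p(\mathbf{Q})=f(\mathcal{P}_{\mathbf{Q}})$ for all $\mathbf{Q}\in B(\mathcal{L})$.
   Context: A query is a deterministic function on $\mathcal{I}$. A query bundle $\mathbf{Q}$ is a finite tuple of queries from $\mathcal{L}$, evaluated componentwise; $B(\mathcal{L})$ is the set of finite query bundles, closed under union (concatenation). An instance-independent pricing function assigns a price $p(\mathbf{Q})\ge 0$ to each $\mathbf{Q}\in B(\mathcal{L})$. $\mathbf{Q}_2\twoheadrightarrow\mathbf{Q}_1$ means: for all $D',D''\in\mathcal{I}$, $\mathbf{Q}_2(D')=\mathbf{Q}_2(D'')$ implies $\mathbf{Q}_1(D')=\mathbf{Q}_1(D'')$. $p$ has no information arbitrage if $\mathbf{Q}_2\twoheadrightarrow\mathbf{Q}_1$ implies $p(\mathbf{Q}_2)\ge p(\mathbf{Q}_1)$. $\mathcal{P}_{\mathbf{Q}}$ is the partition of $\mathcal{I}$ into the equivalence classes of $D\sim D'\iff \mathbf{Q}(D)=\mathbf{Q}(D')$. For partitions, $\mathcal{P}_1\succeq\mathcal{P}_2$ ($\mathcal{P}_1$ refines $\mathcal{P}_2$) if every block of $\mathcal{P}_1$ is contained in some block of $\mathcal{P}_2$. $\Pi^{\mathcal{L}}_{\mathcal{I}}=\{\mathcal{P}_{\mathbf{Q}}:\mathbf{Q}\in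 B(\mathcal{L})\}$, ordered by $\succeq$. $f$ is monotone over $\Pi^{\mathcal{L}}_{\mathcal{I}}$ if $\mathcal{P}_1\succeq\mathcal{P}_2$ implies $f(\mathcal{P}_1)\ge f(\mathcal{P}_2)$. *)

theory Defs
  imports Complex_Main "HOL-Library.Countable_Set"
begin

(* A query bundle is a finite tuple (list) of queries from L, evaluated componentwise. *)

definition bundles :: "('i \<Rightarrow> 'o) set \<Rightarrow> ('i \<Rightarrow> 'o) list set" where
  "bundles L = {Qs. set Qs \<subseteq> L}"

definition eval_bundle :: "('i \<Rightarrow> 'o) list \<Rightarrow> 'i \<Rightarrow> 'o list" where
  "eval_bundle Qs D = map (\<lambda>q. q D) Qs"

definition determines :: "'i set \<Rightarrow> ('i \<Rightarrow> 'o) list \<Rightarrow> ('i \<Rightarrow> 'o) list \<Rightarrow> bool" where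
  "determines I Q2 Q1 \<longleftrightarrow>
     (\<forall>D'\<in>I. \<forall>D''\<in>I. eval_bundle Q2 D' = eval_bundle Q2 D'' \<longrightarrow> eval_bundle Q1 D' = eval_bundle Q1 D'')"

definition no_info_arbitrage ::
  "'i set \<Rightarrow> ('i \<Rightarrow> 'o) set \<Rightarrow> (('i \<Rightarrow> 'o) list \<Rightarrow> real) \<Rightarrow> bool" where
  "no_info_arbitrage I L p \<longleftrightarrow>
     (\<forall>Q1\<in>bundles L. \<forall>Q2\<in>bundles L. determines I Q2 Q1 \<longrightarrow> p Q2 \<ge> p Q1)"

definition bundle_partition :: "'i set \<Rightarrow> ('i \<Rightarrow> 'o) list \<Rightarrow> 'i set set" where
  "bundle_partition I Q = (\<lambda>D. {D'\<in>I. eval_bundle Q D' = eval_bundle Q D}) ` I"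

definition refines :: "'i set set \<Rightarrow> 'i set set \<Rightarrow> bool" where
  "refines P1 P2 \<longleftrightarrow> (\<forall>B1\<in>P1. \<exists>B2\<in>P2. B1 \<subseteq> B2)"

definition partitions_of :: "'i set \<Rightarrow> ('i \<Rightarrow> 'o) set \<Rightarrow> 'i set set set" where
  "partitions_of I L = bundle_partition I ` bundles L"

definition monotone_over :: "'i set set set \<Rightarrow> ('i set set \<Rightarrow> real) \<Rightarrow> bool" where
  "monotone_over \<Pi> f \<longleftrightarrow> (\<forall>P1\<in>\<Pi>. \<forall>P2\<in>\<Pi>. refines P1 P2 \<longrightarrow> f P1 \<ge> f P2)"

end

theory Submission imports Defs begin
lemma ref_det: assumes r: "refines (bundle_partition I Q2) (bundle_partition I Q1)"
  shows "determines I Q2 Q1"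
  unfolding determines_def
proof (intro ballI impI)
  fix D' D'' assume a: "D' \<in> I" "D'' \<in> I" "eval_bundle Q2 D' = eval_bundle Q2 D''"
  have "{D\<in>I. eval_bundle Q2 D = eval_bundle Q2 D'} \<in> bundle_partition I Q2"
    using a(1) unfolding bundle_partition_def by (rule imageI)
  then obtain B2 where B2: "B2 \<in> bundle_partition I Q1"
    "{D\<in>I. eval_bundle Q2 D = eval_bundle Q2 D'} \<subseteq> B2"
    using r unfolding refines_def by blast
  from B2(1) obtain E where E: "E \<in> I" "B2 = {D\<in>I. eval_bundle Q1 D = eval_bundle Q1 E}"
    unfolding bundle_partition_def by (rule imageE)
  have "D' \<in> {D\<in>I. eval_bundle Q2 D = eval_bundle Q2 D'}" using a(1) by simp
  hence "D' \<in> B2" using B2(2) by (rule subsetD[rotated])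
  have "D'' \<in> {D\<in>I. eval_bundle Q2 D = eval_bundle Q2 D'}" using a(2) a(3)[symmetric] by simp
  hence "D'' \<in> B2" using B2(2) by (rule subsetD[rotated])
  note \<open>D' \<in> B2\<close> this
  hence "eval_bundle Q1 D' = eval_bundle Q1 E" "eval_bundle Q1 D'' = eval_bundle Q1 E" using E by simp_all
  thus "eval_bundle Q1 D' = eval_bundle Q1 D''" by (rule trans[OF _ sym])
qed
lemma det_ref: assumes d: "determines I Q2 Q1"
  shows "refines (bundle_partition I Q2) (bundle_partition I Q1)"
  unfolding refines_def
proof
  fix B1 assume "B1 \<in> bundle_partition I Q2"
  then obtain D where D: "D \<in> I" "B1 = {D'\<in>I. eval_bundle Q2 D' = eval_bundle Q2 D}"
    unfolding bundle_partition_def by (rule imageE)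
  have "B1 \<subseteq> {D'\<in>I. eval_bundle Q1 D' = eval_bundle Q1 D}"
  proof
    fix x assume "x \<in> B1"
    hence "x \<in> I" "eval_bundle Q2 x = eval_bundle Q2 D" using D by blast+
    moreover have "eval_bundle Q1 x = eval_bundle Q1 D"
      using d \<open>x \<in> I\<close> D(1) \<open>eval_bundle Q2 x = eval_bundle Q2 D\<close>
      unfolding determines_def by blast
    ultimately show "x \<in> {D'\<in>I. eval_bundle Q1 D' = eval_bundle Q1 D}" by blast
  qed
  moreover have "{D'\<in>I. eval_bundle Q1 D' = eval_bundle Q1 D} \<in> bundle_partition I Q1"
    using D(1) unfolding bundle_partition_def by (rule imageI)
  ultimately show "\<exists>B2\<in>bundle_partition I Q1. B1 \<subseteq> B2" by blast
qed
lemma nia_use: "no_info_arbitrage I L p \<Longrightarrow> Q1 \<in> bundles L \<Longrightarrow> Q2 \<in> bundles L \<Longrightarrow>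
   determines I Q2 Q1 \<Longrightarrow> p Q2 \<ge> p Q1"
  unfolding no_info_arbitrage_def by blast

theorem theorem4:
  fixes I :: "'i set" and L :: "('i \<Rightarrow> 'o) set" and p :: "('i \<Rightarrow> 'o) list \<Rightarrow> real"
  assumes "countable I" and "I \<noteq> {}"
    and "\<forall>Q\<in>bundles L. p Q \<ge> 0"
  shows "no_info_arbitrage I L p \<longleftrightarrow>
    (\<exists>f :: 'i set set \<Rightarrow> real.
        (\<forall>P\<in>partitions_of I L. f P \<ge> 0) \<and>
        monotone_over (partitions_of I L) f \<and>
        (\<forall>Q\<in>bundles L. p Q = f (bundle_partition I Q)))"
proof
  assume na: "no_info_arbitrage I L p"
  define r where "r P = (SOME Q. Q \<in> bundles L \<and> bundle_partition I Q = P)" for P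
  define f where "f P = p (r P)" for P
  have rr: "r P \<in> bundles L \<and> bundle_partition I (r P) = P" if "P \<in> partitions_of I L" for P
  proof -
    from that obtain Q where "Q \<in> bundles L" "bundle_partition I Q = P"
      unfolding partitions_of_def by (rule imageE) simp
    hence "\<exists>Q. Q \<in> bundles L \<and> bundle_partition I Q = P" by blast
    thus ?thesis unfolding r_def by (rule someI_ex)
  qed
  have refl: "refines P P" for P :: "'i set set" unfolding refines_def by blast
  have pf: "p Q = f (bundle_partition I Q)" if Q: "Q \<in> bundles L" for Q
  proof -
    have P: "bundle_partition I Q \<in> partitions_of I L" using Q unfolding partitions_of_def by (rule imageI)
    note R = rr[OF P]
    have "refines (bundle_partition I Q) (bundle_partition I (r (bundle_partition I Q)))"
      "refines (bundle_partition I (r (bundle_partition I Q))) (bundle_partition I Q)"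
      using R refl[of "bundle_partition I Q"] by simp_all
    hence "determines I Q (r (bundle_partition I Q))" "determines I (r (bundle_partition I Q)) Q"
      by (simp_all add: ref_det)
    hence "p Q \<ge> p (r (bundle_partition I Q))" "p (r (bundle_partition I Q)) \<ge> p Q"
      using nia_use[OF na] Q R by blast+
    thus ?thesis unfolding f_def by linarith
  qed
  show "\<exists>f :: 'i set set \<Rightarrow> real.
        (\<forall>P\<in>partitions_of I L. f P \<ge> 0) \<and>
        monotone_over (partitions_of I L) f \<and>
        (\<forall>Q\<in>bundles L. p Q = f (bundle_partition I Q))"
  proof (intro exI conjI ballI)
    fix P assume "P \<in> partitions_of I L"
    hence "r P \<in> bundles L" using rr by blast
    thus "f P \<ge> 0" using assms(3) unfolding f_def by blast
  next
    show "monotone_over (partitions_of I L) f" unfolding monotone_over_def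
    proof (intro ballI impI)
      fix P1 P2 assume a: "P1 \<in> partitions_of I L" "P2 \<in> partitions_of I L" "refines P1 P2"
      have "refines (bundle_partition I (r P1)) (bundle_partition I (r P2))"
        using rr[OF a(1)] rr[OF a(2)] a(3) by simp
      hence "determines I (r P1) (r P2)" by (rule ref_det)
      thus "f P1 \<ge> f P2" using nia_use[OF na] rr[OF a(1)] rr[OF a(2)]
        unfolding f_def by blast
    qed
  next
    fix Q assume "Q \<in> bundles L" thus "p Q = f (bundle_partition I Q)" by (rule pf)
  qed
next
  assume "\<exists>f :: 'i set set \<Rightarrow> real.
        (\<forall>P\<in>partitions_of I L. f P \<ge> 0) \<and>
        monotone_over (partitions_of I L) f \<and>
        (\<forall>Q\<in>bundles L. p Q = f (bundle_partition I Q))"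
  then obtain f where m: "monotone_over (partitions_of I L) f"
    and e: "\<forall>Q\<in>bundles L. p Q = f (bundle_partition I Q)" by blast
  show "no_info_arbitrage I L p" unfolding no_info_arbitrage_def
  proof (intro ballI impI)
    fix Q1 Q2 assume a: "Q1 \<in> bundles L" "Q2 \<in> bundles L" "determines I Q2 Q1"
    have "bundle_partition I Q1 \<in> partitions_of I L" using a(1) unfolding partitions_of_def by (rule imageI)
    moreover have "bundle_partition I Q2 \<in> partitions_of I L" using a(2) unfolding partitions_of_def by (rule imageI)
    moreover have "refines (bundle_partition I Q2) (bundle_partition I Q1)"
      using a(3) by (rule det_ref)
    ultimately have "f (bundle_partition I Q2) \<ge> f (bundle_partition I Q1)"
      using m unfolding monotone_over_def by blast
    thus "p Q2 \<ge> p Q1" using e a(1,2) by simp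
  qed
qed

end
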